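(* Let $(\mathcal V,\otimes,\lambda)$ be a Monoidal category (all $\lambda^\phi$ invertible). A homotopy coalgebra $(C,\chi)$ in $\mathcal V$ is isomorphic (as a homotopy coalgebra) to the homotopy coalgebra associated with an ordinary coalgebra if and only if all morphisms $\chi^I_{\mathbf1,\dots,\mathbf1}:C(1)^{\otimes I}\to C(I)$, $I\in\mathbb N$, are invertible.
   Context: $\mathcal O_{sk}$ is the category with objects $\mathbf n=\{1<\dots<n\}$, $n\ge0$ (identified with $n\in\mathbb N$), and non-decreasing maps; $\sqcup$ is ordered disjoint union; composition is diagrammatic. Structure morphisms of $\mathcal V$: $\lambda^\phi:\otimes^{j\in J}\otimes^{i\in\phi^{-1}j}X_i\to\otimes^{i\in I}X_i$ for $\phi:I\to J$ in $\mathcal O_{sk}$. A homotopy coalgebra $(C,\chi)$ is a lax Monoidal functor $(\mathcal O_{sk}^{op},\sqcup,\mathrm{id})\to(\mathcal V,\otimes,\lambda)$: a functor $C:\mathcal O_{sk}^{op}\to\mathcal V$ together with morphisms $\chi^I_{N_1,\dots,N_I}:\otimes^{i\in I}C(N_i)\to C(\sqcup_iN_i)$ natural in the $N_i$, with $\chi^{\mathbf1}_N=\mathrm{id}$ and $(\otimes^{j\in J}\chi^{\phi^{-1}j})\chi^J=\lambda^\phi\chi^I$ for all $\phi:I\to J$. A morphism $t:(C,\chi)\to(G,\gamma)$ is a family $t(k):C(k)\to G(k)$ natural with respect to $\mathcal O_{sk}^{op}$ and with $\chi^I t(\sum n_i)=(\otimes^{i\in I}t(n_i))\gamma^I$. An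 ordinary coalgebra is $C$ with $\Delta_I:C\to C^{\otimes I}$, $\Delta_{\mathbf1}=\mathrm{id}$, $\Delta_I=\Delta_J(\otimes_j\Delta_{\phi^{-1}j})\lambda^\phi$; its associated homotopy coalgebra has $C(J)=C^{\otimes J}$, $C(\phi^{op})=(\otimes_j\Delta_{\phi^{-1}j})\lambda^\phi$, $\chi^I_{n_1,\dots,n_I}=\lambda^{\sqcup_i\mathbf n_i\to I}$. *)

theory Defs
  imports Main
begin

text \<open>Objects of O_sk are natural numbers n (standing for {1<...<n}; we index
elements by 0..n-1).  A morphism m -> n (non-decreasing map) is represented
canonically as the list of its values: a sorted list of length m with entries < n.\<close>

definition osk_hom :: "nat \<Rightarrow> nat \<Rightarrow> nat list \<Rightarrow> bool" where
  "osk_hom m n \<phi> \<longleftrightarrow> length \<phi> = m \<and> sorted \<phi> \<and> (\<forall>x\<in>set \<phi>. x < n)"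

definition osk_id :: "nat \<Rightarrow> nat list" where
  "osk_id n = [0..<n]"

text \<open>diagrammatic composition: phi : I -> J, psi : J -> K gives phi psi : I -> K\<close>
definition osk_comp :: "nat list \<Rightarrow> nat list \<Rightarrow> nat list" where
  "osk_comp \<phi> \<psi> = map (\<lambda>j. \<psi> ! j) \<phi>"

text \<open>the sub-family of X indexed by the fibre phi^{-1} j (in the order of I)\<close>
definition fib :: "nat list \<Rightarrow> 'a list \<Rightarrow> nat \<Rightarrow> 'a list" where
  "fib \<phi> X j = map fst (filter (\<lambda>p. snd p = j) (zip X \<phi>))"

definition fsize :: "nat list \<Rightarrow> nat \<Rightarrow> nat" where
  "fsize \<phi> j = length (filter (\<lambda>x. x = j) \<phi>)"

text \<open>restriction of phi : I -> J over psi^{-1} k, as a map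
  (phi psi)^{-1} k -> psi^{-1} k, both re-indexed from 0 (J has size nJ)\<close>
definition osk_restr :: "nat \<Rightarrow> nat list \<Rightarrow> nat list \<Rightarrow> nat \<Rightarrow> nat list" where
  "osk_restr nJ \<phi> \<psi> k =
     map (\<lambda>j. j - length (filter (\<lambda>j'. \<psi> ! j' < k) [0..<nJ])) (fib (osk_comp \<phi> \<psi>) \<phi> k)"

text \<open>ordinal sum of maps f_i : M_i -> N_i, giving sum M_i -> sum N_i\<close>
definition osk_sum :: "nat list \<Rightarrow> nat list list \<Rightarrow> nat list" where
  "osk_sum Ns fs = concat (map (\<lambda>i. map (\<lambda>x. x + sum_list (take i Ns)) (fs ! i)) [0..<length Ns])"

text \<open>the canonical map  n_1 \<sqcup> ... \<sqcup> n_I -> I\<close>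
definition osk_collapse :: "nat list \<Rightarrow> nat list" where
  "osk_collapse Ns = concat (map (\<lambda>i. replicate (Ns ! i) i) [0..<length Ns])"

text \<open>A category with all objects of type 'o and all morphisms of type 'm;
composition mcmp is diagrammatic (mcmp f g = f ; g, defined when mcod f = mdom g).
tns xs = tensor product of the family xs (indexed by length xs), tnsm on morphisms.
mlam J phi X is lambda^phi : tensor_{j<J} tensor_{i in phi^{-1} j} X_i -> tensor_i X_i.\<close>

record ('o, 'm) mcat =
  mdom :: "'m \<Rightarrow> 'o"
  mcod :: "'m \<Rightarrow> 'o"
  midm :: "'o \<Rightarrow> 'm"
  mcmp :: "'m \<Rightarrow> 'm \<Rightarrow> 'm"
  tns :: "'o list \<Rightarrow> 'o"
  tnsm :: "'m list \<Rightarrow> 'm"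
  mlam :: "nat \<Rightarrow> nat list \<Rightarrow> 'o list \<Rightarrow> 'm"

definition is_category :: "('o, 'm, 'z) mcat_scheme \<Rightarrow> bool" where
  "is_category V \<longleftrightarrow>
     (\<forall>a. mdom V (midm V a) = a \<and> mcod V (midm V a) = a) \<and>
     (\<forall>f g. mcod V f = mdom V g \<longrightarrow>
        mdom V (mcmp V f g) = mdom V f \<and> mcod V (mcmp V f g) = mcod V g) \<and>
     (\<forall>f. mcmp V (midm V (mdom V f)) f = f \<and> mcmp V f (midm V (mcod V f)) = f) \<and>
     (\<forall>f g h. mcod V f = mdom V g \<and> mcod V g = mdom V h \<longrightarrow>
        mcmp V (mcmp V f g) h = mcmp V f (mcmp V g h))"

definition invertible :: "('o, 'm, 'z) mcat_scheme \<Rightarrow> 'm \<Rightarrow> bool" where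
  "invertible V f \<longleftrightarrow> (\<exists>g. mdom V g = mcod V f \<and> mcod V g = mdom V f \<and>
      mcmp V f g = midm V (mdom V f) \<and> mcmp V g f = midm V (mcod V f))"

definition tensor_functors :: "('o, 'm, 'z) mcat_scheme \<Rightarrow> bool" where
  "tensor_functors V \<longleftrightarrow>
     (\<forall>fs. mdom V (tnsm V fs) = tns V (map (mdom V) fs) \<and>
           mcod V (tnsm V fs) = tns V (map (mcod V) fs)) \<and>
     (\<forall>xs. tnsm V (map (midm V) xs) = midm V (tns V xs)) \<and>
     (\<forall>fs gs. length fs = length gs \<and> (\<forall>i<length fs. mcod V (fs ! i) = mdom V (gs ! i)) \<longrightarrow>
        tnsm V (map2 (mcmp V) fs gs) = mcmp V (tnsm V fs) (tnsm V gs)) \<and>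
     (\<forall>x. tns V [x] = x) \<and> (\<forall>f. tnsm V [f] = f)"

definition nested_tns :: "('o, 'm, 'z) mcat_scheme \<Rightarrow> nat \<Rightarrow> nat list \<Rightarrow> 'o list \<Rightarrow> 'o" where
  "nested_tns V J \<phi> X = tns V (map (\<lambda>j. tns V (fib \<phi> X j)) [0..<J])"

definition lax_monoidal_cat :: "('o, 'm, 'z) mcat_scheme \<Rightarrow> bool" where
  "lax_monoidal_cat V \<longleftrightarrow> is_category V \<and> tensor_functors V \<and>
     \<comment> \<open>typing of lambda\<close>
     (\<forall>J \<phi> X. osk_hom (length X) J \<phi> \<longrightarrow>
        mdom V (mlam V J \<phi> X) = nested_tns V J \<phi> X \<and> mcod V (mlam V J \<phi> X) = tns V X) \<and>
     \<comment> \<open>naturality of lambda\<close>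
     (\<forall>J \<phi> fs. osk_hom (length fs) J \<phi> \<longrightarrow>
        mcmp V (tnsm V (map (\<lambda>j. tnsm V (fib \<phi> fs j)) [0..<J])) (mlam V J \<phi> (map (mcod V) fs))
        = mcmp V (mlam V J \<phi> (map (mdom V) fs)) (tnsm V fs)) \<and>
     \<comment> \<open>lambda^{id} = id\<close>
     (\<forall>X. mlam V (length X) (osk_id (length X)) X = midm V (tns V X)) \<and>
     \<comment> \<open>lambda^{I -> 1} = id\<close>
     (\<forall>X. mlam V 1 (replicate (length X) 0) X = midm V (tns V X)) \<and>
     \<comment> \<open>coherence for phi : I -> J, psi : J -> K\<close>
     (\<forall>J K \<phi> \<psi> X. osk_hom (length X) J \<phi> \<and> osk_hom J K \<psi> \<longrightarrow>
        mcmp V (mlam V K \<psi> (map (\<lambda>j. tns V (fib \<phi> X j)) [0..<J])) (mlam V J \<phi> X)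
        = mcmp V (tnsm V (map (\<lambda>k. mlam V (fsize \<psi> k) (osk_restr J \<phi> \<psi> k)
                                           (fib (osk_comp \<phi> \<psi>) X k)) [0..<K]))
                 (mlam V K (osk_comp \<phi> \<psi>) X))"

definition monoidal_cat :: "('o, 'm, 'z) mcat_scheme \<Rightarrow> bool" where
  "monoidal_cat V \<longleftrightarrow> lax_monoidal_cat V \<and>
     (\<forall>J \<phi> X. osk_hom (length X) J \<phi> \<longrightarrow> invertible V (mlam V J \<phi> X))"

text \<open>hob n = C(n); hmor n phi = C(phi^op) : C(n) -> C(m) for phi : m -> n;
  hchi Ns = chi^I_{N_1,...,N_I} with I = length Ns.\<close>
record ('o, 'm) hcoalg =
  hob :: "nat \<Rightarrow> 'o"
  hmor :: "nat \<Rightarrow> nat list \<Rightarrow> 'm"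
  hchi :: "nat list \<Rightarrow> 'm"

definition is_hcoalg :: "('o, 'm, 'z) mcat_scheme \<Rightarrow> ('o, 'm) hcoalg \<Rightarrow> bool" where
  "is_hcoalg V C \<longleftrightarrow>
     \<comment> \<open>C is a functor O_sk^op -> V\<close>
     (\<forall>m n \<phi>. osk_hom m n \<phi> \<longrightarrow> mdom V (hmor C n \<phi>) = hob C n \<and> mcod V (hmor C n \<phi>) = hob C m) \<and>
     (\<forall>n. hmor C n (osk_id n) = midm V (hob C n)) \<and>
     (\<forall>l m n \<phi> \<psi>. osk_hom l m \<phi> \<and> osk_hom m n \<psi> \<longrightarrow>
        hmor C n (osk_comp \<phi> \<psi>) = mcmp V (hmor C n \<psi>) (hmor C m \<phi>)) \<and>
     \<comment> \<open>typing of chi\<close>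
     (\<forall>Ns. mdom V (hchi C Ns) = tns V (map (hob C) Ns) \<and> mcod V (hchi C Ns) = hob C (sum_list Ns)) \<and>
     \<comment> \<open>chi^1 = id\<close>
     (\<forall>n. hchi C [n] = midm V (hob C n)) \<and>
     \<comment> \<open>naturality of chi in the N_i (f_i : M_i -> N_i, M_i = length (fs ! i))\<close>
     (\<forall>Ns fs. length fs = length Ns \<and> (\<forall>i<length Ns. osk_hom (length (fs ! i)) (Ns ! i) (fs ! i)) \<longrightarrow>
        mcmp V (tnsm V (map (\<lambda>i. hmor C (Ns ! i) (fs ! i)) [0..<length Ns])) (hchi C (map length fs))
        = mcmp V (hchi C Ns) (hmor C (sum_list Ns) (osk_sum Ns fs))) \<and>
     \<comment> \<open>coherence for phi : I -> J\<close>
     (\<forall>J \<phi> Ns. osk_hom (length Ns) J \<phi> \<longrightarrow>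
        mcmp V (tnsm V (map (\<lambda>j. hchi C (fib \<phi> Ns j)) [0..<J]))
               (hchi C (map (\<lambda>j. sum_list (fib \<phi> Ns j)) [0..<J]))
        = mcmp V (mlam V J \<phi> (map (hob C) Ns)) (hchi C Ns))"

definition is_hmorph :: "('o, 'm, 'z) mcat_scheme \<Rightarrow> ('o, 'm) hcoalg \<Rightarrow> ('o, 'm) hcoalg
    \<Rightarrow> (nat \<Rightarrow> 'm) \<Rightarrow> bool" where
  "is_hmorph V C G t \<longleftrightarrow>
     (\<forall>k. mdom V (t k) = hob C k \<and> mcod V (t k) = hob G k) \<and>
     (\<forall>m n \<phi>. osk_hom m n \<phi> \<longrightarrow> mcmp V (hmor C n \<phi>) (t m) = mcmp V (t n) (hmor G n \<phi>)) \<and>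
     (\<forall>Ns. mcmp V (hchi C Ns) (t (sum_list Ns)) = mcmp V (tnsm V (map t Ns)) (hchi G Ns))"

definition hcoalg_iso :: "('o, 'm, 'z) mcat_scheme \<Rightarrow> ('o, 'm) hcoalg \<Rightarrow> ('o, 'm) hcoalg \<Rightarrow> bool" where
  "hcoalg_iso V C G \<longleftrightarrow> (\<exists>t s. is_hmorph V C G t \<and> is_hmorph V G C s \<and>
      (\<forall>k. mcmp V (t k) (s k) = midm V (hob C k) \<and> mcmp V (s k) (t k) = midm V (hob G k)))"

definition is_coalg :: "('o, 'm, 'z) mcat_scheme \<Rightarrow> 'o \<Rightarrow> (nat \<Rightarrow> 'm) \<Rightarrow> bool" where
  "is_coalg V D \<Delta> \<longleftrightarrow>
     (\<forall>I. mdom V (\<Delta> I) = D \<and> mcod V (\<Delta> I) = tns V (replicate I D)) \<and>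
     \<Delta> 1 = midm V D \<and>
     (\<forall>I J \<phi>. osk_hom I J \<phi> \<longrightarrow>
        \<Delta> I = mcmp V (\<Delta> J) (mcmp V (tnsm V (map (\<lambda>j. \<Delta> (fsize \<phi> j)) [0..<J]))
                                        (mlam V J \<phi> (replicate I D))))"

definition assoc_hcoalg :: "('o, 'm, 'z) mcat_scheme \<Rightarrow> 'o \<Rightarrow> (nat \<Rightarrow> 'm) \<Rightarrow> ('o, 'm) hcoalg" where
  "assoc_hcoalg V D \<Delta> =
     \<lparr> hob = (\<lambda>J. tns V (replicate J D)),
       hmor = (\<lambda>J \<phi>. mcmp V (tnsm V (map (\<lambda>j. \<Delta> (fsize \<phi> j)) [0..<J]))
                             (mlam V J \<phi> (replicate (length \<phi>) D))),
       hchi = (\<lambda>Ns. mlam V (length Ns) (osk_collapse Ns) (replicate (sum_list Ns) D)) \<rparr>"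

end

theory Submission
  imports Defs
begin


lemma fib_rep1: "length \<phi> = I \<Longrightarrow> fib \<phi> (replicate I (1::nat)) j = replicate (fsize \<phi> j) 1"
  unfolding fib_def fsize_def
proof (induction \<phi> arbitrary: I)
  case Nil thus ?case by simp
next
  case (Cons a \<phi>) thus ?case by (cases I) auto
qed

lemma fib_repD: "length \<phi> = I \<Longrightarrow> fib \<phi> (replicate I d) j = replicate (fsize \<phi> j) d"
  unfolding fib_def fsize_def
proof (induction \<phi> arbitrary: I)
  case Nil thus ?case by simp
next
  case (Cons a \<phi>) thus ?case by (cases I) auto
qed

lemma osk_comp_const: "osk_hom I J \<phi> \<Longrightarrow> osk_comp \<phi> (replicate J 0) = replicate I 0"
  unfolding osk_hom_def osk_comp_def by (auto simp: map_replicate_const[symmetric] intro!: map_idI)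

lemma osk_hom_const: "osk_hom I 1 (replicate I 0)"
  unfolding osk_hom_def by (auto simp: sorted_iff_nth_mono)

lemma osk_id_hom: "osk_hom n n (osk_id n)"
  unfolding osk_hom_def osk_id_def by auto

lemma sorted_split:
  "sorted xs \<Longrightarrow> \<forall>x\<in>set xs. x < Suc J \<Longrightarrow>
   xs = filter (\<lambda>x. x < J) xs @ filter (\<lambda>x. x = J) (xs::nat list)"
proof (induction xs)
  case Nil thus ?case by simp
next
  case (Cons a xs)
  show ?case
  proof (cases "a < J")
    case True thus ?thesis using Cons by auto
  next
    case False
    hence "a = J" using Cons by auto
    moreover have "\<forall>x\<in>set xs. x = J"
    proof
      fix x assume "x \<in> set xs"
      hence "J \<le> x" "x < Suc J" using Cons \<open>a = J\<close> by auto
      thus "x = J" by simp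
    qed
    ultimately show ?thesis by (simp add: filter_id_conv)
  qed
qed

lemma sorted_concat_rep:
  "sorted xs \<Longrightarrow> \<forall>x\<in>set xs. x < J \<Longrightarrow>
   concat (map (\<lambda>i. replicate (fsize xs i) i) [0..<J]) = (xs::nat list)"
proof (induction J arbitrary: xs)
  case 0 thus ?case by auto
next
  case (Suc J)
  have 1: "xs = filter (\<lambda>x. x < J) xs @ filter (\<lambda>x. x = J) xs"
    using sorted_split Suc.prems by blast
  have s: "sorted (filter (\<lambda>x. x < J) xs)" using Suc.prems sorted_filter by (metis map_ident)
  have IH: "concat (map (\<lambda>i. replicate (fsize (filter (\<lambda>x. x < J) xs) i) i) [0..<J])
            = filter (\<lambda>x. x < J) xs" using Suc.IH[OF s] by auto
  have m: "map (\<lambda>i. replicate (fsize (filter (\<lambda>x. x < J) xs) i) i) [0..<J]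
      = map (\<lambda>i. replicate (fsize xs i) i) [0..<J]"
  proof (rule map_cong[OF refl])
    fix i assume "i \<in> set [0..<J]"
    hence "i < J" by simp
    hence "(\<lambda>x. x = i \<and> x < J) = (\<lambda>x. x = i)" by auto
    thus "replicate (fsize (filter (\<lambda>x. x < J) xs) i) i = replicate (fsize xs i) i"
      by (simp add: fsize_def filter_filter conj_commute)
  qed
  have r: "replicate (fsize xs J) J = filter (\<lambda>x. x = J) xs"
    unfolding fsize_def using replicate_length_filter[of J xs] by (metis (mono_tags, lifting) filter_cong)
  have "concat (map (\<lambda>i. replicate (fsize xs i) i) [0..<Suc J])
     = filter (\<lambda>x. x < J) xs @ filter (\<lambda>x. x = J) xs" using IH[unfolded m] r by simp
  thus ?case using 1 by simp
qed

lemma osk_sum_const: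
  assumes "osk_hom I J \<phi>"
  shows "osk_sum (replicate J 1) (map (\<lambda>j. replicate (fsize \<phi> j) 0) [0..<J]) = \<phi>"
proof -
  have "osk_sum (replicate J 1) (map (\<lambda>j. replicate (fsize \<phi> j) 0) [0..<J])
       = concat (map (\<lambda>i. replicate (fsize \<phi> i) i) [0..<J])"
    unfolding osk_sum_def by (auto simp: map_replicate_const sum_list_replicate intro!: arg_cong[where f=concat])
  thus ?thesis using sorted_concat_rep assms unfolding osk_hom_def by auto
qed

lemma collapse_rep1: "osk_collapse (replicate I 1) = osk_id I"
proof -
  have "map (\<lambda>i. replicate (replicate I 1 ! i) i) [0..<I] = map (\<lambda>i. [i]) [0..<I]" by auto
  note m = this
  have "concat (map (\<lambda>i. [i]) [0..<I]) = [0..<I]" by (induction I) auto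
  thus ?thesis unfolding osk_collapse_def osk_id_def length_replicate m by simp
qed

lemma collapse_len: "length (osk_collapse Ns) = sum_list Ns"
  unfolding osk_collapse_def by (simp add: length_concat comp_def sum_list_sum_nth atLeast0LessThan)

lemma sorted_concat_rep_gen: "sorted (concat (map (\<lambda>i. replicate (f i) i) [0..<n]))"
proof (induction n)
  case 0 thus ?case by simp
next
  case (Suc n) thus ?case by (auto simp: sorted_append)
qed

lemma fsize_concat_rep_gen:
  "fsize (concat (map (\<lambda>i. replicate (f i) (i::nat)) [0..<n])) j = (if j < n then f j else 0)"
proof (induction n)
  case 0 thus ?case by (simp add: fsize_def)
next
  case (Suc n) thus ?case by (auto simp: fsize_def filter_replicate less_Suc_eq)
qed

lemma collapse_hom: "osk_hom (sum_list Ns) (length Ns) (osk_collapse Ns)"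
  unfolding osk_hom_def using collapse_len[of Ns] sorted_concat_rep_gen[of "\<lambda>i. Ns ! i"]
  by (auto simp: osk_collapse_def)

lemma collapse_fsize: "j < length Ns \<Longrightarrow> fsize (osk_collapse Ns) j = Ns ! j"
  unfolding osk_collapse_def by (simp add: fsize_concat_rep_gen)



definition minv :: "('o, 'm, 'z) mcat_scheme \<Rightarrow> 'm \<Rightarrow> 'm" where
  "minv V f = (SOME g. mdom V g = mcod V f \<and> mcod V g = mdom V f \<and>
      mcmp V f g = midm V (mdom V f) \<and> mcmp V g f = midm V (mcod V f))"

locale MC =
  fixes V :: "('o, 'm) mcat"
  assumes mon: "monoidal_cat V"
begin

abbreviation dm where "dm \<equiv> mdom V"
abbreviation cd where "cd \<equiv> mcod V"
abbreviation cmp where "cmp \<equiv> mcmp V"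
abbreviation idm where "idm \<equiv> midm V"
abbreviation tm where "tm \<equiv> tnsm V"
abbreviation to where "to \<equiv> tns V"

lemma cat: "is_category V" using mon unfolding monoidal_cat_def lax_monoidal_cat_def by auto
lemma tf: "tensor_functors V" using mon unfolding monoidal_cat_def lax_monoidal_cat_def by auto

lemma id_dm[simp]: "dm (idm a) = a" and id_cd[simp]: "cd (idm a) = a"
  using cat unfolding is_category_def by auto
lemma dm_cmp[simp]: "cd f = dm g \<Longrightarrow> dm (cmp f g) = dm f"
  using cat unfolding is_category_def by auto
lemma cd_cmp[simp]: "cd f = dm g \<Longrightarrow> cd (cmp f g) = cd g"
  using cat unfolding is_category_def by auto
lemma idl[simp]: "dm f = a \<Longrightarrow> cmp (idm a) f = f"
  using cat unfolding is_category_def by auto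
lemma idr[simp]: "cd f = a \<Longrightarrow> cmp f (idm a) = f"
  using cat unfolding is_category_def by auto
lemma assoc: "cd f = dm g \<Longrightarrow> cd g = dm h \<Longrightarrow> cmp (cmp f g) h = cmp f (cmp g h)"
  using cat unfolding is_category_def by blast

lemma tm_dm[simp]: "dm (tm fs) = to (map dm fs)" and tm_cd[simp]: "cd (tm fs) = to (map cd fs)"
  using tf unfolding tensor_functors_def by auto
lemma tm_id: "tm (map idm xs) = idm (to xs)"
  using tf unfolding tensor_functors_def by auto
lemma to_single[simp]: "to [x] = x" using tf unfolding tensor_functors_def by auto
lemma tm_single[simp]: "tm [f] = f" using tf unfolding tensor_functors_def by auto
lemma tm_cmp: "(\<And>x. x \<in> set xs \<Longrightarrow> cd (f x) = dm (g x)) \<Longrightarrow>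
   tm (map (\<lambda>x. cmp (f x) (g x)) xs) = cmp (tm (map f xs)) (tm (map g xs))"
proof -
  assume a: "\<And>x. x \<in> set xs \<Longrightarrow> cd (f x) = dm (g x)"
  have "tm (map2 cmp (map f xs) (map g xs)) = cmp (tm (map f xs)) (tm (map g xs))"
    using tf a unfolding tensor_functors_def by auto
  thus ?thesis by (simp add: map2_map_map)
qed

lemma lam_typ: "osk_hom (length X) J \<phi> \<Longrightarrow> dm (mlam V J \<phi> X) = nested_tns V J \<phi> X \<and> cd (mlam V J \<phi> X) = to X"
  using mon unfolding monoidal_cat_def lax_monoidal_cat_def by blast
lemma lam_id: "mlam V (length X) (osk_id (length X)) X = idm (to X)"
  using mon unfolding monoidal_cat_def lax_monoidal_cat_def by blast

definition ipair where "ipair f g \<longleftrightarrow> dm g = cd f \<and> cd g = dm f \<and> cmp f g = idm (dm f) \<and> cmp g f = idm (cd f)"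

lemma invertible_ipair: "invertible V f \<Longrightarrow> ipair f (minv V f)"
  unfolding invertible_def minv_def ipair_def by (rule someI_ex)

lemma ipair_invertible: "ipair f g \<Longrightarrow> invertible V f"
  unfolding invertible_def ipair_def by blast

lemma ipair_sym: "ipair f g \<Longrightarrow> ipair g f"
  unfolding ipair_def by auto

lemma ipair_unique: "ipair f g \<Longrightarrow> ipair f h \<Longrightarrow> g = h"
proof -
  assume a: "ipair f g" "ipair f h"
  have g: "dm g = cd f" "cd g = dm f" "cmp f g = idm (dm f)" "cmp g f = idm (cd f)"
    and h: "dm h = cd f" "cd h = dm f" "cmp f h = idm (dm f)" "cmp h f = idm (cd f)"
    using a unfolding ipair_def by auto
  have "g = cmp g (cmp f h)" using g h by simp
  also have "\<dots> = cmp (cmp g f) h" using g h by (intro assoc[symmetric]) auto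
  also have "\<dots> = h" using g h by simp
  finally show ?thesis .
qed

lemma ipair_cmp: "ipair f g \<Longrightarrow> ipair f' g' \<Longrightarrow> cd f = dm f' \<Longrightarrow> ipair (cmp f f') (cmp g' g)"
proof -
  assume a: "ipair f g" "ipair f' g'" and c: "cd f = dm f'"
  have g: "dm g = cd f" "cd g = dm f" "cmp f g = idm (dm f)" "cmp g f = idm (cd f)"
    and h: "dm g' = cd f'" "cd g' = dm f'" "cmp f' g' = idm (dm f')" "cmp g' f' = idm (cd f')"
    using a unfolding ipair_def by auto
  have "cmp (cmp f f') (cmp g' g) = cmp f (cmp f' (cmp g' g))" using g h c by (intro assoc) auto
  also have "cmp f' (cmp g' g) = cmp (cmp f' g') g" using g h c by (intro assoc[symmetric]) auto
  also have "\<dots> = g" using g h c by simp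
  finally have 1: "cmp (cmp f f') (cmp g' g) = idm (dm f)" using g by simp
  have "cmp (cmp g' g) (cmp f f') = cmp g' (cmp g (cmp f f'))" using g h c by (intro assoc) auto
  also have "cmp g (cmp f f') = cmp (cmp g f) f'" using g h c by (intro assoc[symmetric]) auto
  also have "\<dots> = f'" using g h c by simp
  finally have 2: "cmp (cmp g' g) (cmp f f') = idm (cd f')" using h by simp
  show ?thesis using 1 2 g h c unfolding ipair_def by simp
qed

lemma ipair_tm: "(\<And>x. x \<in> set xs \<Longrightarrow> ipair (f x) (g x)) \<Longrightarrow> ipair (tm (map f xs)) (tm (map g xs))"
proof -
  assume a: "\<And>x. x \<in> set xs \<Longrightarrow> ipair (f x) (g x)"
  have "cmp (tm (map f xs)) (tm (map g xs)) = tm (map (\<lambda>x. cmp (f x) (g x)) xs)"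
    using a by (simp add: tm_cmp ipair_def)
  also have "\<dots> = tm (map idm (map (\<lambda>x. dm (f x)) xs))"
  proof -
    have "map (\<lambda>x. cmp (f x) (g x)) xs = map (\<lambda>x. idm (dm (f x))) xs"
      using a unfolding ipair_def by (intro map_cong) auto
    thus ?thesis unfolding map_map o_def by (rule arg_cong)
  qed
  also have "\<dots> = idm (dm (tm (map f xs)))" using tm_id[of "map (\<lambda>x. dm (f x)) xs"] by (simp add: comp_def)
  finally have 1: "cmp (tm (map f xs)) (tm (map g xs)) = idm (dm (tm (map f xs)))" .
  have "cmp (tm (map g xs)) (tm (map f xs)) = tm (map (\<lambda>x. cmp (g x) (f x)) xs)"
    using a by (simp add: tm_cmp ipair_def)
  also have "\<dots> = tm (map idm (map (\<lambda>x. cd (f x)) xs))"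
  proof -
    have "map (\<lambda>x. cmp (g x) (f x)) xs = map (\<lambda>x. idm (cd (f x))) xs"
      using a unfolding ipair_def by (intro map_cong) auto
    thus ?thesis unfolding map_map o_def by (rule arg_cong)
  qed
  also have "\<dots> = idm (cd (tm (map f xs)))" using tm_id[of "map (\<lambda>x. cd (f x)) xs"] by (simp add: comp_def)
  finally have 2: "cmp (tm (map g xs)) (tm (map f xs)) = idm (cd (tm (map f xs)))" .
  have e1: "to (map (\<lambda>x. dm (g x)) xs) = to (map (\<lambda>x. cd (f x)) xs)"
    and e2: "to (map (\<lambda>x. cd (g x)) xs) = to (map (\<lambda>x. dm (f x)) xs)"
    using a unfolding ipair_def by (intro arg_cong[where f=to] map_cong; auto)+
  show ?thesis using 1 2 e1 e2 unfolding ipair_def by (simp add: comp_def)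
qed

lemma swap:
  assumes "ipair b b'" "ipair c c'" "cd a = dm b" "cd c = dm d" "cmp a b = cmp c d"
    "cd d = cd b" "dm a = dm c"
  shows "cmp d b' = cmp c' a"
proof -
  have B: "dm b' = cd b" "cd b' = dm b" "cmp b b' = idm (dm b)" "cmp b' b = idm (cd b)"
    and Cc: "dm c' = cd c" "cd c' = dm c" "cmp c c' = idm (dm c)" "cmp c' c = idm (cd c)"
    using assms(1,2) unfolding ipair_def by auto
  note ty = B Cc assms(3,4,6,7)
  have "cmp c' a = cmp c' (cmp a (cmp b b'))" using ty by simp
  also have "cmp a (cmp b b') = cmp (cmp a b) b'" using ty by (intro assoc[symmetric]) auto
  also have "\<dots> = cmp (cmp c d) b'" using assms(5) by simp
  also have "cmp c' \<dots> = cmp (cmp c' (cmp c d)) b'" using ty by (intro assoc[symmetric]) auto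
  also have "cmp c' (cmp c d) = cmp (cmp c' c) d" using ty by (intro assoc[symmetric]) auto
  also have "\<dots> = d" using ty by simp
  finally show ?thesis by simp
qed

lemma hmorph_inv:
  assumes h: "is_hmorph V C G t" and ip: "\<And>k. ipair (t k) (s k)"
    and tyC: "\<And>m n \<phi>. osk_hom m n \<phi> \<Longrightarrow> dm (hmor C n \<phi>) = hob C n \<and> cd (hmor C n \<phi>) = hob C m"
    and tyG: "\<And>m n \<phi>. osk_hom m n \<phi> \<Longrightarrow> dm (hmor G n \<phi>) = hob G n \<and> cd (hmor G n \<phi>) = hob G m"
    and tcC: "\<And>Ns. dm (hchi C Ns) = to (map (hob C) Ns) \<and> cd (hchi C Ns) = hob C (sum_list Ns)"
    and tcG: "\<And>Ns. dm (hchi G Ns) = to (map (hob G) Ns) \<and> cd (hchi G Ns) = hob G (sum_list Ns)"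
  shows "is_hmorph V G C s"
proof -
  have tt: "\<And>k. dm (t k) = hob C k \<and> cd (t k) = hob G k" using h unfolding is_hmorph_def by blast
  have st: "\<And>k. dm (s k) = hob G k \<and> cd (s k) = hob C k" using ip tt unfolding ipair_def by metis
  have 2: "cmp (hmor G n \<phi>) (s m) = cmp (s n) (hmor C n \<phi>)" if ph: "osk_hom m n \<phi>" for m n \<phi>
  proof (rule swap[OF ip ip])
    show "cmp (hmor C n \<phi>) (t m) = cmp (t n) (hmor G n \<phi>)" using h ph unfolding is_hmorph_def by blast
  qed (use tt tyC[OF ph] tyG[OF ph] in auto)
  have 3: "cmp (hchi G Ns) (s (sum_list Ns)) = cmp (tm (map s Ns)) (hchi C Ns)" for Ns
  proof (rule swap[OF ip ipair_tm[OF ip]])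
    show "cmp (hchi C Ns) (t (sum_list Ns)) = cmp (tm (map t Ns)) (hchi G Ns)" using h unfolding is_hmorph_def by blast
    show "cd (tm (map t Ns)) = dm (hchi G Ns)" using tt tcG by (simp add: o_def)
    show "dm (hchi C Ns) = dm (tm (map t Ns))" using tt tcC by (simp add: o_def)
  qed (use tt tcC tcG in auto)
  show ?thesis unfolding is_hmorph_def using st 2 3 by blast
qed

end


locale HC = MC V for V :: "('o, 'm) mcat" +
  fixes C :: "('o, 'm) hcoalg"
  assumes hc: "is_hcoalg V C"
begin

lemma hmor_typ: "osk_hom m n \<phi> \<Longrightarrow> dm (hmor C n \<phi>) = hob C n \<and> cd (hmor C n \<phi>) = hob C m"
  using hc unfolding is_hcoalg_def by blast
lemma hmor_id: "hmor C n (osk_id n) = idm (hob C n)"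
  using hc unfolding is_hcoalg_def by blast
lemma hmor_comp: "osk_hom l m \<phi> \<Longrightarrow> osk_hom m n \<psi> \<Longrightarrow> hmor C n (osk_comp \<phi> \<psi>) = cmp (hmor C n \<psi>) (hmor C m \<phi>)"
  using hc unfolding is_hcoalg_def by blast
lemma hchi_dm[simp]: "dm (hchi C Ns) = to (map (hob C) Ns)" and hchi_cd[simp]: "cd (hchi C Ns) = hob C (sum_list Ns)"
  using hc unfolding is_hcoalg_def by blast+
lemma hchi_single: "hchi C [n] = idm (hob C n)"
  using hc unfolding is_hcoalg_def by blast
lemma hchi_nat: "length fs = length Ns \<Longrightarrow> (\<forall>i<length Ns. osk_hom (length (fs ! i)) (Ns ! i) (fs ! i)) \<Longrightarrow>
        cmp (tm (map (\<lambda>i. hmor C (Ns ! i) (fs ! i)) [0..<length Ns])) (hchi C (map length fs))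
        = cmp (hchi C Ns) (hmor C (sum_list Ns) (osk_sum Ns fs))"
  using hc unfolding is_hcoalg_def by blast
lemma hchi_coh: "osk_hom (length Ns) J \<phi> \<Longrightarrow>
        cmp (tm (map (\<lambda>j. hchi C (fib \<phi> Ns j)) [0..<J]))
               (hchi C (map (\<lambda>j. sum_list (fib \<phi> Ns j)) [0..<J]))
        = cmp (mlam V J \<phi> (map (hob C) Ns)) (hchi C Ns)"
  using hc unfolding is_hcoalg_def by blast

definition X where "X I = hchi C (replicate I 1)"

lemma X_dm[simp]: "dm (X I) = to (replicate I (hob C 1))" and X_cd[simp]: "cd (X I) = hob C I"
  unfolding X_def by (simp_all add: sum_list_replicate)


lemma G_simps: "hob (assoc_hcoalg V D \<Delta>) k = to (replicate k D)"
  "hmor (assoc_hcoalg V D \<Delta>) n \<phi> = cmp (tm (map (\<lambda>j. \<Delta> (fsize \<phi> j)) [0..<n])) (mlam V n \<phi> (replicate (length \<phi>) D))"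
  "hchi (assoc_hcoalg V D \<Delta>) Ns = mlam V (length Ns) (osk_collapse Ns) (replicate (sum_list Ns) D)"
  unfolding assoc_hcoalg_def by simp_all

lemma forward:
  assumes iso: "hcoalg_iso V C (assoc_hcoalg V D \<Delta>)"
  shows "invertible V (X I)"
proof -
  obtain t s where th: "is_hmorph V C (assoc_hcoalg V D \<Delta>) t" and sh: "is_hmorph V (assoc_hcoalg V D \<Delta>) C s"
    and ts: "\<And>k. cmp (t k) (s k) = idm (hob C k) \<and> cmp (s k) (t k) = idm (hob (assoc_hcoalg V D \<Delta>) k)"
    using iso unfolding hcoalg_iso_def by blast
  have tt: "\<And>k. dm (t k) = hob C k \<and> cd (t k) = to (replicate k D)"
    using th unfolding is_hmorph_def G_simps by blast
  have st: "\<And>k. dm (s k) = to (replicate k D) \<and> cd (s k) = hob C k"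
    using sh unfolding is_hmorph_def G_simps by blast
  have ip: "\<And>k. ipair (t k) (s k)" unfolding ipair_def using tt st ts G_simps(1) by metis
  have E: "cmp (hchi C (replicate I 1)) (t (sum_list (replicate I (1::nat))))
     = cmp (tm (map t (replicate I 1))) (hchi (assoc_hcoalg V D \<Delta>) (replicate I 1))"
    using th unfolding is_hmorph_def by blast
  have "hchi (assoc_hcoalg V D \<Delta>) (replicate I 1) = mlam V I (osk_id I) (replicate I D)"
    unfolding G_simps collapse_rep1 by (simp add: sum_list_replicate)
  also have "\<dots> = idm (to (replicate I D))" using lam_id[of "replicate I D"] by simp
  finally have h: "hchi (assoc_hcoalg V D \<Delta>) (replicate I 1) = idm (to (replicate I D))" .
  define A where "A = tm (map t (replicate I 1))"
  have A_cd: "cd A = to (replicate I D)" unfolding A_def using tt by simp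
  have XA: "cmp (X I) (t I) = A" using E h A_cd unfolding A_def X_def by (simp add: sum_list_replicate)
  have "X I = cmp (X I) (cmp (t I) (s I))" using ts tt by simp
  also have "\<dots> = cmp (cmp (X I) (t I)) (s I)" using tt st by (intro assoc[symmetric]) auto
  finally have XX: "X I = cmp A (s I)" using XA by simp
  have "ipair A (tm (map s (replicate I 1)))" unfolding A_def by (rule ipair_tm[OF ip])
  hence "ipair (cmp A (s I)) (cmp (t I) (tm (map s (replicate I 1))))"
    by (rule ipair_cmp[OF _ ipair_sym[OF ip]]) (use A_cd st in simp)
  thus ?thesis unfolding XX[symmetric] by (rule ipair_invertible)
qed

end

lemma map_upt_nth: "map (\<lambda>j. f (xs ! j)) [0..<length xs] = map f xs"
proof -
  have "map (\<lambda>j. f (xs ! j)) [0..<length xs] = map f (map (\<lambda>j. xs ! j) [0..<length xs])" by simp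
  thus ?thesis by (simp only: map_nth)
qed

lemma sum_fsize: "osk_hom I J \<phi> \<Longrightarrow> sum_list (map (fsize \<phi>) [0..<J]) = I"
proof -
  assume a: "osk_hom I J \<phi>"
  have "length (concat (map (\<lambda>i. replicate (fsize \<phi> i) i) [0..<J])) = sum_list (map (fsize \<phi>) [0..<J])"
    by (simp add: length_concat o_def)
  thus ?thesis using sorted_concat_rep[of \<phi> J] a unfolding osk_hom_def by auto
qed

locale HCI = HC +
  assumes Xinv: "\<And>I. invertible V (X I)"
begin

definition Y where "Y I = minv V (X I)"
definition Dl where "Dl n = cmp (hmor C 1 (replicate n 0)) (Y n)"

lemma XY: "ipair (X I) (Y I)" unfolding Y_def using Xinv invertible_ipair by blast
lemma Y_dm[simp]: "dm (Y I) = hob C I" and Y_cd[simp]: "cd (Y I) = to (replicate I (hob C 1))"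
  using XY[of I] unfolding ipair_def by auto
lemma XY_id[simp]: "cmp (X I) (Y I) = idm (to (replicate I (hob C 1)))"
  and YX_id[simp]: "cmp (Y I) (X I) = idm (hob C I)"
  using XY[of I] unfolding ipair_def by auto

lemma hmor1_typ[simp]: "dm (hmor C 1 (replicate n 0)) = hob C 1" "cd (hmor C 1 (replicate n 0)) = hob C n"
  using hmor_typ[OF osk_hom_const] by auto

lemma hmor1_typ'[simp]: "dm (hmor C (Suc 0) (replicate n 0)) = hob C (Suc 0)" "cd (hmor C (Suc 0) (replicate n 0)) = hob C n"
  using hmor1_typ by auto

lemma Dl_dm[simp]: "dm (Dl n) = hob C 1" and Dl_cd[simp]: "cd (Dl n) = to (replicate n (hob C 1))"
  unfolding Dl_def using hmor1_typ[of n] by auto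

lemma keyA:
  assumes ph: "osk_hom I J \<phi>"
  shows "cmp (hmor C J \<phi>) (Y I) =
         cmp (Y J) (cmp (tm (map (\<lambda>j. Dl (fsize \<phi> j)) [0..<J])) (mlam V J \<phi> (replicate I (hob C 1))))"
proof -
  define n where "n = fsize \<phi>"
  define D where "D = hob C 1"
  define T where "T = tm (map (\<lambda>j. hmor C 1 (replicate (n j) 0)) [0..<J])"
  define U where "U = tm (map (\<lambda>j. Y (n j)) [0..<J])"
  define W where "W = tm (map (\<lambda>j. X (n j)) [0..<J])"
  define H where "H = hchi C (map n [0..<J])"
  define L where "L = mlam V J \<phi> (replicate I D)"
  have lenI: "length \<phi> = I" using ph unfolding osk_hom_def by auto
  have f1: "\<And>j. fib \<phi> (replicate I 1) j = replicate (n j) (1::nat)" using fib_rep1[OF lenI] n_def by auto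
  have f2: "\<And>j. fib \<phi> (replicate I D) j = replicate (n j) D" using fib_repD[OF lenI] n_def by auto
  have sumI: "sum_list (map n [0..<J]) = I" using sum_fsize[OF ph] n_def by simp
  have coh: "cmp W H = cmp L (X I)"
  proof -
    have "cmp (tm (map (\<lambda>j. hchi C (fib \<phi> (replicate I 1) j)) [0..<J]))
               (hchi C (map (\<lambda>j. sum_list (fib \<phi> (replicate I 1) j)) [0..<J]))
        = cmp (mlam V J \<phi> (map (hob C) (replicate I 1))) (hchi C (replicate I 1))"
      using hchi_coh[of "replicate I 1" J \<phi>] ph by simp
    thus ?thesis unfolding W_def H_def L_def f1 X_def D_def by (simp add: sum_list_replicate)
  qed
  have nat: "cmp T H = cmp (X J) (hmor C J \<phi>)"
  proof -
    let ?fs = "map (\<lambda>j. replicate (n j) (0::nat)) [0..<J]"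
    have "cmp (tm (map (\<lambda>i. hmor C (replicate J 1 ! i) (?fs ! i)) [0..<length (replicate J (1::nat))])) (hchi C (map length ?fs))
        = cmp (hchi C (replicate J 1)) (hmor C (sum_list (replicate J 1)) (osk_sum (replicate J 1) ?fs))"
      by (rule hchi_nat) (auto simp: osk_hom_const[simplified])
    moreover have e1: "map (\<lambda>i. hmor C (replicate J 1 ! i) (?fs ! i)) [0..<length (replicate J (1::nat))]
        = map (\<lambda>j. hmor C 1 (replicate (n j) 0)) [0..<J]" by simp
    moreover have e2: "map length ?fs = map n [0..<J]" by (simp add: o_def)
    moreover have e3: "osk_sum (replicate J 1) ?fs = \<phi>" using osk_sum_const[OF ph] n_def by simp
    ultimately have "cmp T H = cmp (hchi C (replicate J 1)) (hmor C (sum_list (replicate J (1::nat))) \<phi>)"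
      unfolding T_def H_def by metis
    thus ?thesis unfolding X_def by (simp add: sum_list_replicate)
  qed
  have WU: "ipair W U" unfolding W_def U_def by (rule ipair_tm) (rule XY)
  have T_dm: "dm T = to (replicate J D)" unfolding T_def D_def by (simp add: o_def map_replicate_const)
  have T_cd: "cd T = to (map (\<lambda>j. hob C (n j)) [0..<J])" unfolding T_def by (simp add: o_def)
  have H_dm: "dm H = to (map (\<lambda>j. hob C (n j)) [0..<J])" unfolding H_def by (simp add: o_def)
  have H_cd: "cd H = hob C I" unfolding H_def using sumI by simp
  have W_cd: "cd W = to (map (\<lambda>j. hob C (n j)) [0..<J])" unfolding W_def by (simp add: o_def)
  have W_dm: "dm W = to (map (\<lambda>j. to (replicate (n j) D)) [0..<J])" unfolding W_def D_def by (simp add: o_def)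
  have U_dm: "dm U = cd W" and U_cd: "cd U = dm W" using WU unfolding ipair_def by auto
  have UW: "cmp U W = idm (cd W)" using WU unfolding ipair_def by auto
  have L_dm: "dm L = dm W" and L_cd: "cd L = to (replicate I D)"
    using lam_typ[of "replicate I D" J \<phi>] ph unfolding L_def W_dm nested_tns_def f2 by auto
  have hm_dm: "dm (hmor C J \<phi>) = hob C J" and hm_cd: "cd (hmor C J \<phi>) = hob C I"
    using hmor_typ[OF ph] by auto
  note ty = T_dm T_cd H_dm H_cd W_cd W_dm U_dm U_cd L_dm L_cd hm_dm hm_cd D_def
  have a: "H = cmp U (cmp L (X I))"
  proof -
    have "H = cmp (cmp U W) H" using UW ty by simp
    also have "\<dots> = cmp U (cmp W H)" using ty by (intro assoc) auto
    finally show ?thesis using coh by simp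
  qed
  have b: "hmor C J \<phi> = cmp (Y J) (cmp T H)"
  proof -
    have "hmor C J \<phi> = cmp (cmp (Y J) (X J)) (hmor C J \<phi>)" using ty by simp
    also have "\<dots> = cmp (Y J) (cmp (X J) (hmor C J \<phi>))" using ty by (intro assoc) auto
    finally show ?thesis using nat by simp
  qed
  have c: "cmp T H = cmp (cmp (cmp T U) L) (X I)"
  proof -
    have "cmp T H = cmp T (cmp U (cmp L (X I)))" using a by simp
    also have "\<dots> = cmp (cmp T U) (cmp L (X I))" using ty by (intro assoc[symmetric]) auto
    also have "\<dots> = cmp (cmp (cmp T U) L) (X I)" using ty by (intro assoc[symmetric]) auto
    finally show ?thesis .
  qed
  have d: "cmp (hmor C J \<phi>) (Y I) = cmp (Y J) (cmp (cmp T U) L)"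
  proof -
    have "cmp (hmor C J \<phi>) (Y I) = cmp (cmp (Y J) (cmp (cmp (cmp T U) L) (X I))) (Y I)" using b c by simp
    also have "\<dots> = cmp (Y J) (cmp (cmp (cmp (cmp T U) L) (X I)) (Y I))" using ty by (intro assoc) auto
    also have "cmp (cmp (cmp (cmp T U) L) (X I)) (Y I) = cmp (cmp (cmp T U) L) (cmp (X I) (Y I))"
      using ty by (intro assoc) auto
    also have "\<dots> = cmp (cmp T U) L" using ty by simp
    finally show ?thesis .
  qed
  have e: "cmp T U = tm (map (\<lambda>j. Dl (fsize \<phi> j)) [0..<J])"
    unfolding T_def U_def Dl_def n_def by (rule tm_cmp[symmetric]) simp
  show ?thesis using d e unfolding L_def D_def by simp
qed

lemma Y1: "Y 1 = idm (hob C 1)"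
proof -
  have "X 1 = idm (hob C 1)" unfolding X_def using hchi_single by simp
  hence "ipair (X 1) (idm (hob C 1))" unfolding ipair_def by simp
  thus ?thesis using XY ipair_unique by blast
qed

lemma Dl1: "Dl 1 = idm (hob C 1)"
proof -
  have "replicate 1 (0::nat) = osk_id 1" by (simp add: osk_id_def)
  thus ?thesis unfolding Dl_def Y1 using hmor_id[of 1] by simp
qed

lemma R_typ:
  assumes ph: "osk_hom I J \<phi>"
  shows "dm (tm (map (\<lambda>j. Dl (fsize \<phi> j)) [0..<J])) = to (replicate J (hob C 1))"
    "cd (tm (map (\<lambda>j. Dl (fsize \<phi> j)) [0..<J])) = dm (mlam V J \<phi> (replicate I (hob C 1)))"
    "cd (mlam V J \<phi> (replicate I (hob C 1))) = to (replicate I (hob C 1))"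
proof -
  have lenI: "length \<phi> = I" using ph unfolding osk_hom_def by auto
  show "dm (tm (map (\<lambda>j. Dl (fsize \<phi> j)) [0..<J])) = to (replicate J (hob C 1))"
    by (simp add: o_def map_replicate_const)
  show "cd (tm (map (\<lambda>j. Dl (fsize \<phi> j)) [0..<J])) = dm (mlam V J \<phi> (replicate I (hob C 1)))"
    using lam_typ[of "replicate I (hob C 1)" J \<phi>] ph
    by (simp add: o_def nested_tns_def fib_repD[OF lenI])
  show "cd (mlam V J \<phi> (replicate I (hob C 1))) = to (replicate I (hob C 1))"
    using lam_typ[of "replicate I (hob C 1)" J \<phi>] ph by simp
qed

lemma coalg: "is_coalg V (hob C 1) Dl"
  unfolding is_coalg_def
proof (intro conjI allI impI)
  fix I J \<phi> assume ph: "osk_hom I J \<phi>"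
  define R where "R = cmp (tm (map (\<lambda>j. Dl (fsize \<phi> j)) [0..<J])) (mlam V J \<phi> (replicate I (hob C 1)))"
  have R_dm: "dm R = to (replicate J (hob C 1))" unfolding R_def using R_typ[OF ph] by simp
  have cJ: "osk_hom J 1 (replicate J 0)" by (rule osk_hom_const)
  have "hmor C 1 (replicate I 0) = hmor C 1 (osk_comp \<phi> (replicate J 0))"
    using osk_comp_const[OF ph] by simp
  also have "\<dots> = cmp (hmor C 1 (replicate J 0)) (hmor C J \<phi>)" by (rule hmor_comp[OF ph cJ])
  finally have e: "hmor C 1 (replicate I 0) = cmp (hmor C 1 (replicate J 0)) (hmor C J \<phi>)" .
  have ty: "dm (hmor C J \<phi>) = hob C J" "cd (hmor C J \<phi>) = hob C I" using hmor_typ[OF ph] by auto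
  have "Dl I = cmp (cmp (hmor C 1 (replicate J 0)) (hmor C J \<phi>)) (Y I)" unfolding Dl_def e ..
  also have "\<dots> = cmp (hmor C 1 (replicate J 0)) (cmp (hmor C J \<phi>) (Y I))"
    using ty by (intro assoc) auto
  also have "cmp (hmor C J \<phi>) (Y I) = cmp (Y J) R" unfolding R_def by (rule keyA[OF ph])
  also have "cmp (hmor C 1 (replicate J 0)) (cmp (Y J) R) = cmp (Dl J) R"
    unfolding Dl_def using R_dm by (intro assoc[symmetric]) auto
  finally show "Dl I = cmp (Dl J) R" .
qed (use Dl1 in auto)

abbreviation G where "G \<equiv> assoc_hcoalg V (hob C 1) Dl"



lemma tyG: "osk_hom m n \<phi> \<Longrightarrow> dm (hmor G n \<phi>) = hob G n \<and> cd (hmor G n \<phi>) = hob G m"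
proof -
  assume ph: "osk_hom m n \<phi>"
  have "length \<phi> = m" using ph unfolding osk_hom_def by auto
  thus ?thesis using R_typ[OF ph] unfolding G_simps by simp
qed

lemma collapse_facts:
  "length (osk_collapse Ns) = sum_list Ns"
  "\<And>j. j < length Ns \<Longrightarrow> fib (osk_collapse Ns) (replicate (sum_list Ns) x) j = replicate (Ns ! j) x"
  by (auto simp: collapse_len fib_repD[OF collapse_len] collapse_fsize)

lemma tcG: "dm (hchi G Ns) = to (map (hob G) Ns) \<and> cd (hchi G Ns) = hob G (sum_list Ns)"
proof -
  have l: "dm (mlam V (length Ns) (osk_collapse Ns) (replicate (sum_list Ns) (hob C 1)))
     = nested_tns V (length Ns) (osk_collapse Ns) (replicate (sum_list Ns) (hob C 1))"
    "cd (mlam V (length Ns) (osk_collapse Ns) (replicate (sum_list Ns) (hob C 1))) = to (replicate (sum_list Ns) (hob C 1))"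
    using lam_typ[of "replicate (sum_list Ns) (hob C 1)" "length Ns" "osk_collapse Ns"] collapse_hom[of Ns] by auto
  have "map (\<lambda>j. to (fib (osk_collapse Ns) (replicate (sum_list Ns) (hob C 1)) j)) [0..<length Ns]
      = map (\<lambda>j. to (replicate (Ns ! j) (hob C 1))) [0..<length Ns]"
    by (intro map_cong) (auto simp: fib_repD[OF collapse_len] collapse_fsize)
  also have "\<dots> = map (hob G) Ns" using map_upt_nth[of "hob G" Ns] by (simp add: G_simps)
  finally show ?thesis using l unfolding G_simps(3) nested_tns_def by (simp add: G_simps(1))
qed

lemma tcC: "dm (hchi C Ns) = to (map (hob C) Ns) \<and> cd (hchi C Ns) = hob C (sum_list Ns)" by simp

lemma chiY: "cmp (hchi C Ns) (Y (sum_list Ns)) = cmp (tm (map Y Ns)) (hchi G Ns)"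
proof -
  define S where "S = sum_list Ns"
  define \<phi> where "\<phi> = osk_collapse Ns"
  have ph: "osk_hom (length (replicate S (1::nat))) (length Ns) \<phi>" unfolding \<phi>_def S_def using collapse_hom by simp
  have m1: "map (\<lambda>j. hchi C (fib \<phi> (replicate S 1) j)) [0..<length Ns] = map X Ns"
  proof -
    have "map (\<lambda>j. hchi C (fib \<phi> (replicate S 1) j)) [0..<length Ns] = map (\<lambda>j. X (Ns ! j)) [0..<length Ns]"
      unfolding \<phi>_def S_def X_def by (intro map_cong) (auto simp: fib_repD[OF collapse_len] collapse_fsize)
    thus ?thesis by (simp add: map_upt_nth)
  qed
  have m2: "map (\<lambda>j. sum_list (fib \<phi> (replicate S (1::nat)) j)) [0..<length Ns] = Ns"
  proof -
    have "map (\<lambda>j. sum_list (fib \<phi> (replicate S (1::nat)) j)) [0..<length Ns] = map (\<lambda>j. Ns ! j) [0..<length Ns]"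
      unfolding \<phi>_def S_def by (intro map_cong) (auto simp: sum_list_replicate fib_repD[OF collapse_len] collapse_fsize)
    thus ?thesis by (simp add: map_nth)
  qed
  have coh: "cmp (tm (map X Ns)) (hchi C Ns) = cmp (hchi G Ns) (X S)"
    using hchi_coh[OF ph] unfolding m1 m2 unfolding G_simps \<phi>_def S_def X_def by simp
  have "cmp (hchi C Ns) (Y S) = cmp (tm (map Y Ns)) (hchi G Ns)"
  proof (rule swap[OF XY ipair_tm[OF XY]])
    show "cmp (hchi G Ns) (X S) = cmp (tm (map X Ns)) (hchi C Ns)" by (rule coh[symmetric])
    show "cd (hchi G Ns) = dm (X S)" using tcG unfolding S_def G_simps(1) by simp
    show "cd (tm (map X Ns)) = dm (hchi C Ns)" by (simp add: o_def)
    show "cd (hchi C Ns) = cd (X S)" unfolding S_def by simp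
    show "dm (hchi G Ns) = dm (tm (map X Ns))" using tcG unfolding G_simps(1) by (simp add: o_def)
  qed
  thus ?thesis unfolding S_def .
qed

lemma Yhm: "is_hmorph V C G Y"
  unfolding is_hmorph_def
proof (intro conjI allI impI)
  fix m n \<phi> assume ph: "osk_hom m n \<phi>"
  have "length \<phi> = m" using ph unfolding osk_hom_def by auto
  thus "cmp (hmor C n \<phi>) (Y m) = cmp (Y n) (hmor G n \<phi>)" using keyA[OF ph] unfolding G_simps by simp
next
  fix k show "dm (Y k) = hob C k" by simp
next
  fix k show "cd (Y k) = hob G k" by (simp only: G_simps Y_cd)
next
  fix Ns show "cmp (hchi C Ns) (Y (sum_list Ns)) = cmp (tm (map Y Ns)) (hchi G Ns)" by (rule chiY)
qed

lemma backward: "\<exists>D \<Delta>. is_coalg V D \<Delta> \<and> hcoalg_iso V C (assoc_hcoalg V D \<Delta>)"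
proof (intro exI conjI)
  show "is_coalg V (hob C 1) Dl" by (rule coalg)
  have ip: "\<And>k. ipair (Y k) (X k)" using XY ipair_sym by blast
  have Xhm: "is_hmorph V G C X"
    by (rule hmorph_inv[OF Yhm ip hmor_typ tyG tcC tcG])
  have "\<forall>k. cmp (Y k) (X k) = idm (hob C k) \<and> cmp (X k) (Y k) = idm (hob G k)"
    by (simp only: G_simps YX_id XY_id simp_thms allI)
  thus "hcoalg_iso V C G" unfolding hcoalg_iso_def
    using Yhm Xhm by blast
qed

end

theorem mainTheorem3:
  fixes V :: "('o, 'm) mcat" and C :: "('o, 'm) hcoalg"
  assumes "monoidal_cat V" and "is_hcoalg V C"
  shows "(\<exists>D \<Delta>. is_coalg V D \<Delta> \<and> hcoalg_iso V C (assoc_hcoalg V D \<Delta>))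
         \<longleftrightarrow> (\<forall>I. invertible V (hchi C (replicate I 1)))"
proof -
  interpret HC V C using assms by (unfold_locales) auto
  show ?thesis
  proof
    assume "\<exists>D \<Delta>. is_coalg V D \<Delta> \<and> hcoalg_iso V C (assoc_hcoalg V D \<Delta>)"
    thus "\<forall>I. invertible V (hchi C (replicate I 1))" using forward unfolding X_def by blast
  next
    assume "\<forall>I. invertible V (hchi C (replicate I 1))"
    then interpret HCI V C by unfold_locales (simp add: X_def)
    show "\<exists>D \<Delta>. is_coalg V D \<Delta> \<and> hcoalg_iso V C (assoc_hcoalg V D \<Delta>)" by (rule backward)
  qed
qed

end
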